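(* Let $\Omega$ be a region of $\mathbb{C}$ and let $F:\Omega\to\mathbb{M}_n$ be a nonconstant analytic function. If every function $z\mapsto s_k(F(z))$, $1\leq k\leq n$, attains its minimum value over $\Omega$ at the same point $z_0\in\Omega$, then $\det(F(z_0))=0$.
   Context: A region is a nonempty open connected subset of $\mathbb{C}$. $\mathbb{M}_n$ is the set of $n\times n$ complex matrices; $F$ is analytic if each entry is analytic. For $A\in\mathbb{M}_n$, the singular values $s_1(A)\geq\cdots\geq s_n(A)$ are the nonnegative square roots of the eigenvalues of $A^*A$ in nonincreasing order. *)

theory Defs
  imports "HOL-Analysis.Analysis" "Jordan_Normal_Form.Char_Poly"
    "HOL-Computational_Algebra.Polynomial"
begin

definition conj_transpose :: "complex mat \<Rightarrow> complex mat" where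
  "conj_transpose A = mat (dim_col A) (dim_row A) (\<lambda>(i,j). cnj (A $$ (j,i)))"

(* singular values s_1(A) \<ge> ... \<ge> s_n(A): nonnegative square roots of the eigenvalues
   (with algebraic multiplicity, i.e. roots of the characteristic polynomial) of A^* A,
   listed in nonincreasing order *)
definition singular_values :: "complex mat \<Rightarrow> real list" where
  "singular_values A =
     rev (sorted_list_of_multiset
       (image_mset (\<lambda>c. sqrt (Re c)) (proots (char_poly (conj_transpose A * A)))))"

(* s_k(A), 1-based index k *)
definition sing_val :: "nat \<Rightarrow> complex mat \<Rightarrow> real" where
  "sing_val k A = singular_values A ! (k - 1)"

end

theory Submission
  imports Defs "HOL-Complex_Analysis.Conformal_Mappings" "Jordan_Normal_Form.Schur_Decomposition"
begin

definition mtr :: "complex mat \<Rightarrow> complex" where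
  "mtr A = (\<Sum>i<dim_row A. A $$ (i,i))"

lemma mtr_comm:
  assumes "X \<in> carrier_mat n n" "Y \<in> carrier_mat n n"
  shows "mtr (X * Y) = mtr (Y * X)"
proof -
  have "mtr (X * Y) = (\<Sum>i<n. \<Sum>k<n. X $$ (i,k) * Y $$ (k,i))"
    using assms by (simp add: mtr_def scalar_prod_def atLeast0LessThan)
  also have "\<dots> = (\<Sum>k<n. \<Sum>i<n. Y $$ (k,i) * X $$ (i,k))"
    by (subst sum.swap) (simp add: mult.commute)
  also have "\<dots> = mtr (Y * X)"
    using assms by (simp add: mtr_def scalar_prod_def atLeast0LessThan)
  finally show ?thesis .
qed

lemma spectral:
  fixes A :: "complex mat"
  assumes A: "A \<in> carrier_mat n n"
  obtains es where "length es = n" "char_poly A = (\<Prod>a\<leftarrow>es. [:- a, 1:])"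
    "proots (char_poly A) = mset es" "det A = prod_list es" "mtr A = sum_list es"
proof -
  obtain es where es: "char_poly A = (\<Prod>a\<leftarrow>es. [:- a, 1:])" "length es = n"
    using char_poly_factorized[OF A] by blast
  obtain B P Q where sd: "schur_decomposition A es = (B,P,Q)" by (cases "schur_decomposition A es") auto
  from schur_decomposition[OF A es(1) sd] have
    sw: "similar_mat_wit A B P Q" and ut: "upper_triangular B" and dg: "diag_mat B = es" by auto
  from sw A have cr: "B \<in> carrier_mat n n" "P \<in> carrier_mat n n" "Q \<in> carrier_mat n n"
    and PQ: "P * Q = 1\<^sub>m n" and QP: "Q * P = 1\<^sub>m n" and AB: "A = P * B * Q"
    unfolding similar_mat_wit_def Let_def by auto
  have "proots (\<Prod>a\<leftarrow>es. [:- a, 1:]) = mset es" for es :: "complex list"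
  proof (induction es)
    case (Cons a es)
    have nz: "(\<Prod>a\<leftarrow>es. [:- a, 1:]) \<noteq> 0" by (auto simp: prod_list_zero_iff)
    have "(\<Prod>a\<leftarrow>a # es. [:- a, 1:]) = [:- a, 1:] * (\<Prod>a\<leftarrow>es. [:- a, 1:])" by simp
    also have "proots \<dots> = proots [:- a, 1:] + proots (\<Prod>a\<leftarrow>es. [:- a, 1:])"
      by (rule proots_mult) (use nz in auto)
    finally show ?case using Cons by simp
  qed simp
  then have pr: "proots (char_poly A) = mset es" unfolding es(1) .
  have "det A = det P * det B * det Q" unfolding AB using cr by (simp add: det_mult)
  also have "\<dots> = det B * det (P * Q)" using cr by (simp add: det_mult)
  also have "\<dots> = prod_list es" unfolding PQ using det_upper_triangular[OF ut cr(1)] dg by simp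
  finally have de: "det A = prod_list es" .
  have "mtr A = mtr (P * (B * Q))" unfolding AB using cr by (simp add: assoc_mult_mat)
  also have "\<dots> = mtr ((B * Q) * P)" using cr by (intro mtr_comm[of _ n]) auto
  also have "\<dots> = mtr B" using cr QP by (simp add: assoc_mult_mat)
  also have "\<dots> = sum_list es" unfolding dg[symmetric] mtr_def diag_mat_def
    using cr by (simp add: sum_list_sum_nth atLeast0LessThan)
  finally have tr: "mtr A = sum_list es" .
  show ?thesis using that es pr de tr by auto
qed

lemma ct_carrier: "A \<in> carrier_mat n n \<Longrightarrow> conj_transpose A \<in> carrier_mat n n"
  by (auto simp: conj_transpose_def)

lemma ct_dims[simp]: "dim_row (conj_transpose A) = dim_col A" "dim_col (conj_transpose A) = dim_row A"
  by (auto simp: conj_transpose_def)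

lemma ct_index: "A \<in> carrier_mat n n \<Longrightarrow> i < n \<Longrightarrow> j < n \<Longrightarrow> conj_transpose A $$ (i,j) = cnj (A $$ (j,i))"
  by (auto simp: conj_transpose_def)

lemma G_entry:
  assumes A: "A \<in> carrier_mat n n" and i: "i < n" and k: "k < n"
  shows "(conj_transpose A * A) $$ (i,k) = (\<Sum>j<n. cnj (A $$ (j,i)) * A $$ (j,k))"
  using A i k ct_carrier[OF A] by (simp add: scalar_prod_def ct_index atLeast0LessThan)

lemma eig_nonneg:
  fixes A :: "complex mat"
  assumes A: "A \<in> carrier_mat n n" and r: "poly (char_poly (conj_transpose A * A)) e = 0"
  shows "Im e = 0 \<and> Re e \<ge> 0"
proof -
  let ?G = "conj_transpose A * A"
  have G: "?G \<in> carrier_mat n n" using ct_carrier[OF A] A by auto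
  from r eigenvalue_root_char_poly[OF G] obtain v where
    v: "v \<in> carrier_vec n" "v \<noteq> 0\<^sub>v n" "?G *\<^sub>v v = e \<cdot>\<^sub>v v"
    unfolding eigenvalue_def eigenvector_def using G A by auto
  define w where "w j = (\<Sum>k<n. A $$ (j,k) * v $ k)" for j
  have Gv: "(?G *\<^sub>v v) $ i = (\<Sum>k<n. (\<Sum>j<n. cnj (A $$ (j,i)) * A $$ (j,k)) * v $ k)" if i: "i < n" for i
  proof -
    have "(?G *\<^sub>v v) $ i = (\<Sum>k<n. ?G $$ (i,k) * v $ k)"
      using i G v(1) A by (simp add: scalar_prod_def atLeast0LessThan)
    also have "\<dots> = (\<Sum>k<n. (\<Sum>j<n. cnj (A $$ (j,i)) * A $$ (j,k)) * v $ k)"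
      by (rule sum.cong) (use G_entry[OF A i] in auto)
    finally show ?thesis .
  qed
  have "(\<Sum>i<n. cnj (v $ i) * (?G *\<^sub>v v) $ i)
      = (\<Sum>i<n. \<Sum>k<n. \<Sum>j<n. cnj (v $ i) * cnj (A $$ (j,i)) * A $$ (j,k) * v $ k)"
    by (simp add: Gv sum_distrib_left sum_distrib_right mult.assoc)
  also have "\<dots> = (\<Sum>j<n. \<Sum>i<n. \<Sum>k<n. cnj (v $ i) * cnj (A $$ (j,i)) * A $$ (j,k) * v $ k)"
    by (subst sum.swap, subst (2) sum.swap) (rule refl)
  also have "\<dots> = (\<Sum>j<n. cnj (w j) * w j)"
    apply (simp add: w_def sum_product cnj_sum mult.commute mult.left_commute mult.assoc)
    apply (rule sum.cong[OF refl])
    apply (subst sum.swap)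
    apply (simp add: ac_simps)
    done
  also have "\<dots> = of_real (\<Sum>j<n. (cmod (w j))^2)"
    by (simp add: complex_norm_square mult.commute del: of_real_power)
  finally have M: "(\<Sum>i<n. cnj (v $ i) * (?G *\<^sub>v v) $ i) = of_real (\<Sum>j<n. (cmod (w j))^2)" .
  have "(\<Sum>i<n. cnj (v $ i) * (?G *\<^sub>v v) $ i) = e * (\<Sum>i<n. cnj (v $ i) * v $ i)"
    using v(1) by (simp add: v(3) sum_distrib_left mult.left_commute)
  also have "(\<Sum>i<n. cnj (v $ i) * v $ i) = of_real (\<Sum>i<n. (cmod (v $ i))^2)"
    by (simp add: complex_norm_square mult.commute del: of_real_power)
  finally have eq: "e * of_real (\<Sum>i<n. (cmod (v $ i))^2) = of_real (\<Sum>j<n. (cmod (w j))^2)"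
    using M by simp
  obtain i where i: "i < n" "v $ i \<noteq> 0" using v(1,2) by (auto simp: vec_eq_iff)
  have "(cmod (v $ i))^2 \<le> (\<Sum>i<n. (cmod (v $ i))^2)"
    by (rule member_le_sum) (use i in auto)
  then have N: "(\<Sum>i<n. (cmod (v $ i))^2) > 0" using i by (smt (verit) zero_less_norm_iff zero_less_power)
  have gen: "e = of_real (M / N)" if "e * of_real N = of_real M" "N > 0" for M N :: real
  proof -
    have "of_real N \<noteq> (0::complex)" using that(2) by simp
    then have "e = of_real M / of_real N" using that(1) by (simp add: eq_divide_eq)
    then show ?thesis by simp
  qed
  have "e = of_real ((\<Sum>j<n. (cmod (w j))^2) / (\<Sum>i<n. (cmod (v $ i))^2))"
    by (rule gen[OF eq N])
  then show ?thesis by (simp add: sum_nonneg)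
qed

lemma det_cnj:
  fixes A :: "complex mat"
  shows "det (map_mat cnj A) = cnj (det A)"
  unfolding det_def by (simp add: cnj_sum cnj_prod)

lemma det_ct:
  fixes A :: "complex mat"
  assumes A: "A \<in> carrier_mat n n"
  shows "det (conj_transpose A) = cnj (det A)"
proof -
  have "conj_transpose A = transpose_mat (map_mat cnj A)"
    using A by (intro eq_matI) (auto simp: conj_transpose_def)
  then show ?thesis using A det_transpose[of "map_mat cnj A" n] det_cnj by simp
qed

lemma Re_cnj_mult: "Re (cnj z * z) = (cmod z)^2"
  using cmod_power2[of z] by (simp add: power2_eq_square)

lemma prod_list_real:
  "(\<forall>e\<in>set es. Im e = 0) \<Longrightarrow> prod_list es = of_real (prod_list (map Re es))"
  by (induction es) (auto simp: complex_eq_iff)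

lemma sum_list_Re: "Re (sum_list es) = sum_list (map Re es)"
  by (induction es) auto

lemma prod_list_sqrt: "prod_list (map (\<lambda>e. sqrt (f e)) es) = sqrt (prod_list (map f es))"
  by (induction es) (auto simp: real_sqrt_mult)

lemma sv_facts:
  fixes A :: "complex mat"
  assumes A: "A \<in> carrier_mat n n"
  shows "length (singular_values A) = n"
    "\<forall>x\<in>set (singular_values A). x \<ge> 0"
    "prod_list (singular_values A) = cmod (det A)"
    "sum_list (map (\<lambda>x. x^2) (singular_values A)) = (\<Sum>i<n. \<Sum>j<n. (cmod (A $$ (j,i)))^2)"
proof -
  let ?G = "conj_transpose A * A"
  have G: "?G \<in> carrier_mat n n" using ct_carrier[OF A] A by auto
  obtain es where es: "length es = n" "char_poly ?G = (\<Prod>a\<leftarrow>es. [:- a, 1:])"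
    "proots (char_poly ?G) = mset es" "det ?G = prod_list es" "mtr ?G = sum_list es"
    using spectral[OF G] by blast
  have cpnz: "char_poly ?G \<noteq> 0" using es(2) by (auto simp: prod_list_zero_iff)
  have ev: "Im e = 0 \<and> Re e \<ge> 0" if "e \<in> set es" for e
  proof -
    have "e \<in># proots (char_poly ?G)" using es(3) that by simp
    then have "poly (char_poly ?G) e = 0" using cpnz by simp
    then show ?thesis by (rule eig_nonneg[OF A])
  qed
  define g where "g c = sqrt (Re c)" for c
  have sv: "singular_values A = rev (sorted_list_of_multiset (mset (map g es)))"
    unfolding singular_values_def g_def es(3) by simp
  have ms: "mset (singular_values A) = mset (map g es)" unfolding sv by simp
  have "length (singular_values A) = size (mset (singular_values A))" by simp
  then show "length (singular_values A) = n" using ms es(1) by simp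
  show "\<forall>x\<in>set (singular_values A). x \<ge> 0"
  proof
    fix x assume "x \<in> set (singular_values A)"
    then have "x \<in># mset (map g es)" unfolding ms[symmetric] by simp
    then obtain e where e: "e \<in> set es" "x = g e" by auto
    then show "x \<ge> 0" unfolding g_def using ev[OF e(1)] by simp
  qed
  have "prod_list (singular_values A) = prod_mset (mset (singular_values A))"
    by (simp add: prod_mset_prod_list)
  also have "\<dots> = prod_list (map g es)" unfolding ms by (simp only: prod_mset_prod_list)
  also have "\<dots> = sqrt (prod_list (map Re es))" unfolding g_def by (rule prod_list_sqrt)
  also have "prod_list (map Re es) = Re (det ?G)"
    using es(4) prod_list_real[of es] ev by simp
  also have "det ?G = det (conj_transpose A) * det A" by (rule det_mult[OF ct_carrier[OF A] A])
  also have "\<dots> = cnj (det A) * det A" using det_ct[OF A] by simp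
  also have "Re (cnj (det A) * det A) = (cmod (det A))^2" using cmod_power2[of "det A"] by (simp add: power2_eq_square)
  finally show "prod_list (singular_values A) = cmod (det A)" by simp
  have "sum_list (map (\<lambda>x. x^2) (singular_values A)) = sum_list (map (\<lambda>x. x^2) (map g es))"
  proof -
    have "sum_list (map (\<lambda>x. x^2) (singular_values A)) = sum_mset (mset (map (\<lambda>x. x^2) (singular_values A)))"
      by (simp only: sum_mset_sum_list)
    also have "\<dots> = sum_mset (image_mset (\<lambda>x. x^2) (mset (singular_values A)))" by simp
    also have "\<dots> = sum_mset (mset (map (\<lambda>x. x^2) (map g es)))" unfolding ms by (simp add: image_mset.compositionality)
    also have "\<dots> = sum_list (map (\<lambda>x. x^2) (map g es))" by (simp only: sum_mset_sum_list)
    finally show ?thesis .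
  qed
  also have "\<dots> = sum_list (map Re es)"
    unfolding g_def map_map o_def using ev by (intro arg_cong[where f = sum_list] map_cong) auto
  also have "\<dots> = Re (mtr ?G)" using es(5) sum_list_Re by simp
  also have "\<dots> = (\<Sum>i<n. Re (\<Sum>j<n. cnj (A $$ (j,i)) * A $$ (j,i)))"
  proof -
    have "dim_row ?G = n" using G by auto
    then have "mtr ?G = (\<Sum>i<n. ?G $$ (i,i))" unfolding mtr_def by (simp only:)
    also have "\<dots> = (\<Sum>i<n. (\<Sum>j<n. cnj (A $$ (j,i)) * A $$ (j,i)))"
      by (rule sum.cong) (auto simp: G_entry[OF A])
    finally show ?thesis by (simp add: Re_sum)
  qed
  also have "\<dots> = (\<Sum>i<n. \<Sum>j<n. (cmod (A $$ (j,i)))^2)"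
    by (simp only: Re_sum Re_cnj_mult)
  finally show "sum_list (map (\<lambda>x. x^2) (singular_values A)) = (\<Sum>i<n. \<Sum>j<n. (cmod (A $$ (j,i)))^2)" .
qed

lemma det_holo:
  fixes F :: "complex \<Rightarrow> complex mat"
  assumes car: "\<forall>z\<in>S. F z \<in> carrier_mat n n"
    and hol: "\<forall>i<n. \<forall>j<n. (\<lambda>z. F z $$ (i,j)) holomorphic_on S"
  shows "(\<lambda>z. det (F z)) holomorphic_on S"
proof -
  have "(\<lambda>z. \<Sum>p \<in> {p. p permutes {0 ..< n}}. signof p * (\<Prod>i = 0 ..< n. F z $$ (i, p i))) holomorphic_on S"
  proof (intro holomorphic_on_sum holomorphic_on_mult holomorphic_on_prod holomorphic_on_const)
    fix p i assume p: "p \<in> {p. p permutes {0 ..< n}}" and i: "i \<in> {0..<n}"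
    then have "p i < n" using permutes_in_image[of p "{0..<n}" i] by auto
    then show "(\<lambda>z. F z $$ (i, p i)) holomorphic_on S" using hol i by auto
  qed
  moreover have eq: "\<And>z. z \<in> S \<Longrightarrow> det (F z) = (\<Sum>p \<in> {p. p permutes {0 ..< n}}. signof p * (\<Prod>i = 0 ..< n. F z $$ (i, p i)))"
    using car det_def' by blast
  ultimately show ?thesis using holomorphic_cong[OF refl eq] by simp
qed

lemma cmod_diff_sq: "(cmod (a - b))^2 = (cmod a)^2 + (cmod b)^2 - 2 * Re (a * cnj b)"
  unfolding cmod_power2 by (simp add: power2_eq_square algebra_simps)

lemma sumsq_const:
  fixes f :: "'i \<Rightarrow> complex \<Rightarrow> complex"
  assumes fin: "finite I" and hol: "\<forall>i\<in>I. f i holomorphic_on S"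
    and S: "open S" "connected S"
    and C: "\<forall>z\<in>S. (\<Sum>i\<in>I. (cmod (f i z))^2) = C"
    and w: "w \<in> S" and z: "z \<in> S" and i: "i \<in> I"
  shows "f i z = f i w"
proof -
  define g where "g z = (\<Sum>i\<in>I. f i z * cnj (f i w))" for z
  have gh: "g holomorphic_on S" unfolding g_def
    by (intro holomorphic_on_sum holomorphic_on_mult holomorphic_on_const) (use hol in auto)
  have C0: "C \<ge> 0" using C w by (metis sum_nonneg zero_le_power2)
  have gw: "g w = of_real C"
  proof -
    have "g w = (\<Sum>i\<in>I. of_real ((cmod (f i w))^2))" unfolding g_def
      by (rule sum.cong) (simp_all add: complex_norm_square del: of_real_power)
    also have "\<dots> = of_real (\<Sum>i\<in>I. (cmod (f i w))^2)" by (simp only: of_real_sum)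
    also have "\<dots> = of_real C" using C w by simp
    finally show ?thesis .
  qed
  have bound: "cmod (g u) \<le> cmod (g w)" if u: "u \<in> S" for u
  proof -
    have "cmod (g u) \<le> (\<Sum>i\<in>I. cmod (f i u * cnj (f i w)))" unfolding g_def by (rule norm_sum)
    also have "\<dots> \<le> (\<Sum>i\<in>I. ((cmod (f i u))^2 + (cmod (f i w))^2) / 2)"
    proof (rule sum_mono)
      fix i assume "i \<in> I"
      have "0 \<le> (cmod (f i u) - cmod (f i w))^2" by simp
      then show "cmod (f i u * cnj (f i w)) \<le> ((cmod (f i u))^2 + (cmod (f i w))^2) / 2"
        by (simp add: norm_mult power2_eq_square algebra_simps)
    qed
    also have "\<dots> = (C + C) / 2" using C u w by (simp add: sum.distrib flip: sum_divide_distrib)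
    also have "\<dots> = cmod (g w)" using gw C0 by simp
    finally show ?thesis .
  qed
  have "g constant_on S"
    by (rule maximum_modulus_principle[OF gh S(1) S(2) S(1) order_refl w]) (use bound in auto)
  then have gz: "g z = of_real C" using gw z w unfolding constant_on_def by metis
  have "(\<Sum>i\<in>I. (cmod (f i z - f i w))^2) = (\<Sum>i\<in>I. (cmod (f i z))^2) + (\<Sum>i\<in>I. (cmod (f i w))^2) - 2 * Re (g z)"
    unfolding g_def cmod_diff_sq by (simp add: sum.distrib sum_subtractf sum_distrib_left Re_sum)
  also have "\<dots> = 0" using C z w gz by simp
  finally have "(\<Sum>i\<in>I. (cmod (f i z - f i w))^2) = 0" .
  then have "(cmod (f i z - f i w))^2 = 0" using fin i by (subst (asm) sum_nonneg_eq_0_iff) auto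
  then show ?thesis by simp
qed

lemma prod_list_nth: "prod_list (xs :: real list) = (\<Prod>i<length xs. xs ! i)"
proof -
  have "prod_list xs = prod_list (map (\<lambda>i. xs ! i) [0..<length xs])" by (simp add: map_nth)
  also have "\<dots> = (\<Prod>i\<in>set [0..<length xs]. xs ! i)" by (subst prod.distinct_set_conv_list) auto
  finally show ?thesis by (simp add: atLeast0LessThan)
qed

lemma prod_le:
  fixes xs ys :: "real list"
  assumes "length xs = length ys" "\<forall>k<length xs. 0 \<le> xs ! k \<and> xs ! k \<le> ys ! k"
  shows "prod_list xs \<le> prod_list ys"
  unfolding prod_list_nth assms(1) by (intro prod_mono) (use assms in auto)

lemma prod_eq:
  fixes xs ys :: "real list"
  assumes len: "length xs = length ys" and le: "\<forall>k<length xs. 0 < xs ! k \<and> xs ! k \<le> ys ! k"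
    and eq: "prod_list xs = prod_list ys"
  shows "xs = ys"
proof (rule nth_equalityI[OF len])
  fix k assume k: "k < length xs"
  show "xs ! k = ys ! k"
  proof (rule ccontr)
    assume "xs ! k \<noteq> ys ! k"
    then have lt: "xs ! k < ys ! k" using le k by force
    let ?K = "{..<length xs} - {k}"
    have "(\<Prod>i\<in>?K. xs ! i) \<le> (\<Prod>i\<in>?K. ys ! i)"
      by (rule prod_mono) (use le in auto)
    moreover have pos: "(\<Prod>i\<in>?K. xs ! i) > 0" by (rule prod_pos) (use le in auto)
    ultimately have "xs ! k * (\<Prod>i\<in>?K. xs ! i) < ys ! k * (\<Prod>i\<in>?K. ys ! i)"
    proof -
      assume a: "(\<Prod>i\<in>?K. xs ! i) \<le> (\<Prod>i\<in>?K. ys ! i)"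
      have "xs ! k * (\<Prod>i\<in>?K. xs ! i) < ys ! k * (\<Prod>i\<in>?K. xs ! i)" using lt pos by simp
      also have "\<dots> \<le> ys ! k * (\<Prod>i\<in>?K. ys ! i)" using a lt le k by (intro mult_left_mono) auto
      finally show ?thesis .
    qed
    moreover have "prod_list xs = xs ! k * (\<Prod>i\<in>?K. xs ! i)"
      unfolding prod_list_nth using k by (subst prod.remove[of _ k]) auto
    moreover have "prod_list ys = ys ! k * (\<Prod>i\<in>?K. ys ! i)"
      unfolding prod_list_nth using k len by (subst prod.remove[of _ k]) auto
    ultimately show False using eq by simp
  qed
qed

theorem corollary10:
  fixes \<Omega> :: "complex set" and F :: "complex \<Rightarrow> complex mat" and n :: nat and z0 :: complex
  assumes "open \<Omega>" and "connected \<Omega>" and "\<Omega> \<noteq> {}"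
    and "\<forall>z\<in>\<Omega>. F z \<in> carrier_mat n n"
    and "\<forall>i<n. \<forall>j<n. (\<lambda>z. F z $$ (i,j)) analytic_on \<Omega>"
    and "\<not> (\<exists>C. \<forall>z\<in>\<Omega>. F z = C)"
    and "z0 \<in> \<Omega>"
    and "\<forall>k\<in>{1..n}. \<forall>z\<in>\<Omega>. sing_val k (F z0) \<le> sing_val k (F z)"
  shows "Determinant.det (F z0) = 0"
proof (rule ccontr)
  assume d0: "Determinant.det (F z0) \<noteq> 0"
  note op = assms(1) and con = assms(2) and car = assms(4) and z0 = assms(7) and mn = assms(8)
  have hol: "\<forall>i<n. \<forall>j<n. (\<lambda>z. F z $$ (i,j)) holomorphic_on \<Omega>"
    using assms(5) analytic_on_open[OF op] by blast
  have dh: "(\<lambda>z. det (F z)) holomorphic_on \<Omega>" by (rule det_holo[OF car hol])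
  let ?s = "\<lambda>z. singular_values (F z)"
  have len: "length (?s z) = n" if "z \<in> \<Omega>" for z using sv_facts(1) car that by blast
  have nn: "\<forall>x\<in>set (?s z). x \<ge> 0" if "z \<in> \<Omega>" for z using sv_facts(2) car that by blast
  have pr: "prod_list (?s z) = cmod (det (F z))" if "z \<in> \<Omega>" for z using sv_facts(3) car that by blast
  have sq: "sum_list (map (\<lambda>x. x^2) (?s z)) = (\<Sum>i<n. \<Sum>j<n. (cmod (F z $$ (j,i)))^2)"
    if "z \<in> \<Omega>" for z using sv_facts(4) car that by blast
  have le: "?s z0 ! k \<le> ?s z ! k" if "z \<in> \<Omega>" "k < n" for z k
    using mn that unfolding sing_val_def by (metis Suc_eq_plus1 atLeastAtMost_iff diff_Suc_1 le_add2 Suc_leI)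
  have nnk: "0 \<le> ?s z0 ! k" if "k < n" for k using nn[OF z0] len[OF z0] that by auto
  have ge: "cmod (det (F z0)) \<le> cmod (det (F z))" if z: "z \<in> \<Omega>" for z
  proof -
    have "prod_list (?s z0) \<le> prod_list (?s z)"
      by (rule prod_le) (use len[OF z0] len[OF z] le[OF z] nnk in auto)
    then show ?thesis using pr z z0 by simp
  qed
  have nz: "det (F z) \<noteq> 0" if "z \<in> \<Omega>" for z using ge[OF that] d0 by auto
  have hh: "(\<lambda>z. inverse (det (F z))) holomorphic_on \<Omega>"
    by (rule holomorphic_on_inverse[OF dh]) (use nz in auto)
  have "(\<lambda>z. inverse (det (F z))) constant_on \<Omega>"
  proof (rule maximum_modulus_principle[OF hh op con op order_refl z0])
    fix z assume z: "z \<in> \<Omega>"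
    show "cmod (inverse (det (F z))) \<le> cmod (inverse (det (F z0)))"
      using ge[OF z] d0 by (simp add: norm_inverse le_imp_inverse_le)
  qed
  then have deq: "det (F z) = det (F z0)" if "z \<in> \<Omega>" for z
    using that z0 unfolding constant_on_def by (metis inverse_inverse_eq)
  have seq: "?s z = ?s z0" if z: "z \<in> \<Omega>" for z
  proof -
    have pos: "0 < prod_list (?s z0)" using pr[OF z0] d0 by simp
    have "?s z0 = ?s z"
    proof (rule prod_eq)
      show "length (?s z0) = length (?s z)" using len z z0 by simp
      show "prod_list (?s z0) = prod_list (?s z)" using pr z z0 deq[OF z] by simp
      show "\<forall>k<length (?s z0). 0 < ?s z0 ! k \<and> ?s z0 ! k \<le> ?s z ! k"
      proof (intro allI impI conjI)
        fix k assume k: "k < length (?s z0)"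
        then show "?s z0 ! k \<le> ?s z ! k" using le[OF z] len[OF z0] by simp
        have "?s z0 ! k \<noteq> 0"
        proof
          assume "?s z0 ! k = 0"
          then have "0 \<in> set (?s z0)" using k by (metis nth_mem)
          then have "prod_list (?s z0) = 0" using Groups_List.prod_list_zero_iff by blast
          then show False using pos by linarith
        qed
        then show "0 < ?s z0 ! k" using nnk[of k] k len[OF z0] by simp
      qed
    qed
    then show ?thesis by simp
  qed
  define C where "C = (\<Sum>i<n. \<Sum>j<n. (cmod (F z0 $$ (j,i)))^2)"
  let ?I = "{..<n} \<times> {..<n}"
  let ?f = "\<lambda>(p :: nat \<times> nat) z. F z $$ (snd p, fst p)"
  have sumI: "(\<Sum>p\<in>?I. (cmod (?f p z))^2) = C" if z: "z \<in> \<Omega>" for z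
  proof -
    have "(\<Sum>p\<in>?I. (cmod (?f p z))^2) = (\<Sum>i<n. \<Sum>j<n. (cmod (F z $$ (j,i)))^2)"
      by (simp add: sum.cartesian_product split_def)
    also have "\<dots> = C" unfolding C_def using sq[OF z] sq[OF z0] seq[OF z] by simp
    finally show ?thesis .
  qed
  have "F z = F z0" if z: "z \<in> \<Omega>" for z
  proof (rule eq_matI)
    fix i j assume i: "i < dim_row (F z0)" and j: "j < dim_col (F z0)"
    have "?f (j,i) z = ?f (j,i) z0"
      by (rule sumsq_const[of ?I ?f \<Omega> C z0 z]) (use hol op con sumI z z0 i j car in auto)
    then show "F z $$ (i,j) = F z0 $$ (i,j)" by simp
  next
    show "dim_row (F z) = dim_row (F z0)" using car z z0 carrier_matD(1) by metis
  next
    show "dim_col (F z) = dim_col (F z0)" using car z z0 carrier_matD(2) by metis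
  qed
  then show False using assms(6) by blast
qed

end
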